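(* Let $m,n\ge 2$ and let $G$ be the ordered graph with vertices $v_1<\dots<v_{m+n}$ whose only edges are $v_1v_{m+1}$ and $v_mv_{m+n}$ (two crossing edges: one joining the first vertices and one joining the last vertices of the parts $\{v_1,\dots,v_m\}$ and $\{v_{m+1},\dots,v_{m+n}\}$). Then $R(G)=m+n+\max(m,n)-1$.
   Context: An ordered graph is a graph together with a specified linear ordering of its vertex set. An ordered graph $G$ is contained in an ordered graph $H$ if there is an order-preserving injection $V(G)\to V(H)$ mapping edges to edges. $R(G)$ denotes the 2-color ordered Ramsey number: the minimum $N$ such that every 2-coloring of the edges of the ordered complete graph on $N$ vertices contains a monochromatic copy of $G$. *)

theory Defs
  imports Main
begin

definition ordered_graph :: "nat \<Rightarrow> nat set set \<Rightarrow> bool" where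
  "ordered_graph k E \<longleftrightarrow> (\<forall>e\<in>E. \<exists>i j. i < j \<and> j < k \<and> e = {i, j})"

definition mono_copy :: "nat \<Rightarrow> (nat set \<Rightarrow> bool) \<Rightarrow> bool \<Rightarrow> nat \<Rightarrow> nat set set \<Rightarrow> bool" where
  "mono_copy N col c k E \<longleftrightarrow>
     (\<exists>f. strict_mono_on {0..<k} f \<and> f ` {0..<k} \<subseteq> {0..<N} \<and>
          (\<forall>e\<in>E. col (f ` e) = c))"

definition ramsey_arrows :: "nat \<Rightarrow> nat \<Rightarrow> nat set set \<Rightarrow> bool" where
  "ramsey_arrows N k E \<longleftrightarrow> (\<forall>col. \<exists>c. mono_copy N col c k E)"

definition ord_ramsey :: "nat \<Rightarrow> nat set set \<Rightarrow> nat" where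
  "ord_ramsey k E = (LEAST N. ramsey_arrows N k E)"

end

theory Submission
  imports Defs
begin

lemma smo_gap:
  assumes "strict_mono_on {0..<k} (f::nat\<Rightarrow>nat)" "j < k" "i \<le> j"
  shows "f i + (j - i) \<le> f j"
  using assms(2,3)
proof (induction j)
  case 0 then show ?case by simp
next
  case (Suc j)
  show ?case
  proof (cases "i = Suc j")
    case True then show ?thesis by simp
  next
    case False
    then have "i \<le> j" using Suc by simp
    then have "f i + (j - i) \<le> f j" using Suc by simp
    moreover have "f j < f (Suc j)"
      using strict_mono_onD[OF assms(1)] Suc.prems by auto
    ultimately show ?thesis using \<open>i \<le> j\<close> by linarith
  qed
qed

lemma copy_imp:
  assumes "m \<ge> 2" "n \<ge> 2" "mono_copy N col c (m+n) {{0,m},{m-1,m+n-1}}"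
  shows "\<exists>x y z w. x+m-1 \<le> y \<and> y < z \<and> z+n-1 \<le> w \<and> w < N \<and> col {x,z} = c \<and> col {y,w} = c"
proof -
  obtain f where f: "strict_mono_on {0..<m+n} f" "f ` {0..<m+n} \<subseteq> {0..<N}"
    "\<forall>e\<in>{{0,m},{m-1,m+n-1}}. col (f ` e) = c"
    using assms(3) unfolding mono_copy_def by blast
  have 1: "f 0 + (m-1 - 0) \<le> f (m-1)" using smo_gap[OF f(1), of "m-1" 0] assms by simp
  have 2: "f (m-1) < f m" using strict_mono_onD[OF f(1)] assms by simp
  have 3: "f m + (m+n-1 - m) \<le> f (m+n-1)" using smo_gap[OF f(1), of "m+n-1" m] assms by simp
  have "m+n-1 \<in> {0..<m+n}" using assms by simp
  then have "f (m+n-1) \<in> {0..<N}" using f(2) by blast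
  then have 4: "f (m+n-1) < N" by simp
  have 5: "col {f 0, f m} = c" "col {f (m-1), f (m+n-1)} = c" using f(3) by auto
  show ?thesis
    apply (rule exI[of _ "f 0"], rule exI[of _ "f (m-1)"], rule exI[of _ "f m"], rule exI[of _ "f (m+n-1)"])
    using 1 2 3 4 5 assms by auto
qed

lemma imp_copy:
  assumes "m \<ge> 2" "n \<ge> 2" "x+m-1 \<le> y" "y<z" "z+n-1 \<le> w" "w<N" "col{x,z}=c" "col{y,w}=c"
  shows "mono_copy N col c (m+n) {{0,m},{m-1,m+n-1}}"
proof -
  define f where "f i = (if i < m-1 then x+i else if i = m-1 then y else if i < m+n-1 then z + (i-m) else w)" for i
  have sm: "strict_mono_on {0..<m+n} f"
    unfolding strict_mono_on_def f_def using assms by auto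
  have rg: "f ` {0..<m+n} \<subseteq> {0..<N}"
    unfolding f_def using assms by auto
  have e1: "f ` {0,m} = {x,z}" unfolding f_def using assms by auto
  have e2: "f ` {m-1,m+n-1} = {y,w}" unfolding f_def using assms by auto
  show ?thesis unfolding mono_copy_def
    using sm rg e1 e2 assms by (intro exI[of _ f]) auto
qed

lemma upper:
  assumes "m \<ge> 2" "n \<ge> 2"
  shows "ramsey_arrows (m + n + max m n - 1) (m+n) {{0,m},{m-1,m+n-1}}"
  unfolding ramsey_arrows_def
proof
  fix col :: "nat set \<Rightarrow> bool"
  define M where "M = max m n"
  define N where "N = m + n + M - 1"
  have MM: "M \<ge> m" "M \<ge> n" unfolding M_def by auto
  have "col {0,m} = col {m-1,m+M-1} \<or> col {m-1,m+M-1} = col {m+M-2,N-1}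
      \<or> col {0,m+M-1} = col {m+M-2,N-1} \<or> col {0,m+M-1} = col {m-1,N-1}
      \<or> col {0,m} = col {m-1,N-1}"
  proof -
    have g: "\<And>a b c d e::bool. a=b \<or> b=c \<or> d=c \<or> d=e \<or> a=e" by auto
    show ?thesis using g[of "col {0,m}" "col {m-1,m+M-1}" "col {m+M-2,N-1}" "col {0,m+M-1}" "col {m-1,N-1}"] by simp
  qed
  then have "\<exists>c. mono_copy N col c (m+n) {{0,m},{m-1,m+n-1}}"
  proof (elim disjE)
    assume h: "col {0,m} = col {m-1,m+M-1}"
    show ?thesis by (rule exI, rule imp_copy[OF assms, of 0 "m-1" m "m+M-1"]) (use h MM assms in \<open>auto simp: N_def\<close>)
  next
    assume h: "col {m-1,m+M-1} = col {m+M-2,N-1}"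
    show ?thesis by (rule exI, rule imp_copy[OF assms, of "m-1" "m+M-2" "m+M-1" "N-1"]) (use h MM assms in \<open>auto simp: N_def\<close>)
  next
    assume h: "col {0,m+M-1} = col {m+M-2,N-1}"
    show ?thesis by (rule exI, rule imp_copy[OF assms, of 0 "m+M-2" "m+M-1" "N-1"]) (use h MM assms in \<open>auto simp: N_def\<close>)
  next
    assume h: "col {0,m+M-1} = col {m-1,N-1}"
    show ?thesis by (rule exI, rule imp_copy[OF assms, of 0 "m-1" "m+M-1" "N-1"]) (use h MM assms in \<open>auto simp: N_def\<close>)
  next
    assume h: "col {0,m} = col {m-1,N-1}"
    show ?thesis by (rule exI, rule imp_copy[OF assms, of 0 "m-1" m "N-1"]) (use h MM assms in \<open>auto simp: N_def\<close>)
  qed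
  then show "\<exists>c. mono_copy (m + n + max m n - 1) col c (m+n) {{0,m},{m-1,m+n-1}}"
    unfolding N_def M_def .
qed

lemma lower:
  assumes "m \<ge> 2" "n \<ge> 2"
  shows "\<not> ramsey_arrows (m + n + max m n - 2) (m+n) {{0,m},{m-1,m+n-1}}"
proof (cases "n \<le> m")
  case True
  define col where "col e = (Min e < m - 1)" for e :: "nat set"
  have "\<not> mono_copy (m + n + max m n - 2) col c (m+n) {{0,m},{m-1,m+n-1}}" for c
  proof
    assume "mono_copy (m + n + max m n - 2) col c (m+n) {{0,m},{m-1,m+n-1}}"
    from copy_imp[OF assms this] obtain x y z w where h: "x+m-1 \<le> y" "y < z" "z+n-1 \<le> w"
      "w < m + n + max m n - 2" "col {x,z} = c" "col {y,w} = c" by blast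
    have "Min {x,z} = x" "Min {y,w} = y" using h by auto
    then have "(x < m-1) = (y < m-1)" using h unfolding col_def by metis
    then show False using h True assms by auto
  qed
  then show ?thesis unfolding ramsey_arrows_def by blast
next
  case False
  define L where "L = m + n + max m n - 2"
  define col where "col e = (Max e \<ge> L - n + 1)" for e :: "nat set"
  have "\<not> mono_copy L col c (m+n) {{0,m},{m-1,m+n-1}}" for c
  proof
    assume "mono_copy L col c (m+n) {{0,m},{m-1,m+n-1}}"
    from copy_imp[OF assms this] obtain x y z w where h: "x+m-1 \<le> y" "y < z" "z+n-1 \<le> w"
      "w < L" "col {x,z} = c" "col {y,w} = c" by blast
    have "Max {x,z} = z" "Max {y,w} = w" using h by auto
    then have "(z \<ge> L - n + 1) = (w \<ge> L - n + 1)" using h unfolding col_def by metis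
    then show False using h False assms unfolding L_def by auto
  qed
  then show ?thesis unfolding ramsey_arrows_def L_def by blast
qed

lemma arrows_mono:
  assumes "ramsey_arrows N k E" "N \<le> N'"
  shows "ramsey_arrows N' k E"
  unfolding ramsey_arrows_def
proof
  fix col
  obtain c where "mono_copy N col c k E" using assms(1) unfolding ramsey_arrows_def by blast
  then obtain f where f: "strict_mono_on {0..<k} f" "f ` {0..<k} \<subseteq> {0..<N}" "\<forall>e\<in>E. col (f ` e) = c"
    unfolding mono_copy_def by blast
  have "f ` {0..<k} \<subseteq> {0..<N'}" using f(2) assms(2) by auto
  then have "mono_copy N' col c k E" unfolding mono_copy_def using f(1,3) by blast
  then show "\<exists>c. mono_copy N' col c k E" by blast
qed

theorem proposition4p2:
  fixes m n :: nat
  assumes "m \<ge> 2" and "n \<ge> 2"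
  shows "ord_ramsey (m + n) {{0, m}, {m - 1, m + n - 1}} = m + n + max m n - 1"
  unfolding ord_ramsey_def
proof (rule Least_equality)
  show "ramsey_arrows (m + n + max m n - 1) (m + n) {{0, m}, {m - 1, m + n - 1}}"
    using upper[OF assms] .
next
  fix y assume y: "ramsey_arrows y (m + n) {{0, m}, {m - 1, m + n - 1}}"
  show "m + n + max m n - 1 \<le> y"
  proof (rule ccontr)
    assume "\<not> ?thesis"
    then have "y \<le> m + n + max m n - 2" by simp
    from arrows_mono[OF y this] lower[OF assms] show False by simp
  qed
qed

end
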